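(* In any execution of $\mathtt{search}(\mathcal{G},T)$ (defined in the context), let $t$ be a tangle returned by extract-tangles$(Z,\sigma)$ in an iteration whose region has priority $p$, $\alpha\equiv p\pmod 2$. Then, at that moment, every vertex $v\in E_T(t)$ (computed in the full game $\mathcal{G}$) lies in $\mathrm{dom}(r)$ and satisfies $r(v)\equiv\alpha\pmod 2$; that is, all successors of $t$ lie in higher $\alpha$-regions.
   Context: Parity games: $\mathcal{G}=(V_0,V_1,E,\mathrm{pr})$, $V=V_0\cup V_1$ finite, partitioned into vertices of Even ($0$) and Odd ($1$); $E\subseteq V\times V$ with every vertex having a successor; $\mathrm{pr}:V\to\{0,\dots,d\}$. $E(u)=\{v:(u,v)\in E\}$, $\mathrm{pr}(U)=\max_{u\in U}\mathrm{pr}(u)$, $\mathrm{pr}^{-1}(p)$ the set of vertices of priority $p$, $\overline{\alpha}=1-\alpha$. A cycle is won by $\alpha$ if its highest priority has parity $\alpha$. A strategy of $\alpha$ is a partial function $\sigma$ on $V_\alpha$ with $\sigma(v)\in E(v)$. For $U\subseteq V$, $\mathcal{G}\cap U$ is the subgame with vertices $V\cap U$ and edges $E\cap(U\times U)$, and $\mathcal{G}\setminus U=\mathcal{G}\cap(V\setminus U)$. A $p$-tangle is a nonempty $U\subseteq V$ with $p=\mathrm{pr}(U)$ such that for $\alpha\equiv p\pmod 2$ there is a strategy $\sigma:U\cap V_\alpha\to U$ (witness strategy $\sigma_T(U)$) with $(U,E\cap(\sigma\cup((U\cap V_{\overline{\alpha}})\times U)))$ strongly connected and all its cycles won by $\alpha$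 ("won by $\alpha$"). For a tangle $t$ won by $\alpha$ in a game with edge set $E$, $E_T(t)=\{v\notin t:\exists u\in t\cap V_{\overline{\alpha}},(u,v)\in E\}$. $T_\alpha$ denotes the tangles of $T$ won by $\alpha$; for a subgame $\mathcal{G}'$, $T\cap\mathcal{G}'$ denotes the tangles of $T$ contained in its vertex set. Tangle attractor: for a game $\mathcal{G}$ with vertices $V$, tangles $T$, player $\alpha$ and $A\subseteq V$, $\mathit{TAttr}^{\mathcal{G},T}_\alpha(A)$ is the least $Z\supseteq A$ containing every $v\in V_\alpha$ with $E(v)\cap Z\neq\emptyset$, every $v\in V_{\overline{\alpha}}$ with $E(v)\subseteq Z$, and every vertex of every $t\in T_\alpha$ with $\emptyset\neq E_T(t)\subseteq Z$ ($E_T$ computed in $\mathcal{G}$). It is computed iteratively together with a strategy $\sigma$ of $\alpha$ (initially empty): when an $\alpha$-vertex is added individually, $\sigma$ maps it to a successor already in $Z$; each $\alpha$-vertex of $A$ gets as $\sigma$-value a successor in $Z$ once one exists; when the vertices of a tangle $t$ are added, $\sigma(u):=\sigma_T(t)(u)$ for every $\alpha$-vertex $u\in t$ not yet in $\mathrm{dom}(\sigma)$. extract-tangles$(Z,\sigma)$, for a subgame $\mathcal{G}'=(V',E')$ with top priority $p$, $\alpha\equiv p$, region $Z\subseteq V'$ and strategy $\sigma$: let $Y$ be the greatest $X\subseteq Z$ such that every $v\in X\cap V_{\overline{\alpha}}$ has $E'(v)\subseteq X$ and every $v\in X\cap V_\alpha$ has $\sigma(v)\in X$; let $H$ be the graph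 on $Y$ with edges $(v,\sigma(v))$ for $v\in Y\cap V_\alpha$ and $(v,w)\in E'$ for $v\in Y\cap V_{\overline{\alpha}}$; return all bottom strongly connected components of $H$ that contain at least one edge of $H$, each with witness strategy $\sigma$ restricted to it. $\mathtt{search}(\mathcal{G},T)$ (with $T$ a set of tangles of $\mathcal{G}$): repeat forever: set $r:=\emptyset$ (a partial function $V\to\mathbb{N}$, the region function; a region recorded with priority $q$ is called an $\alpha$-region when $q\equiv\alpha\pmod 2$) and $Y:=\emptyset$; while $V\setminus\mathrm{dom}(r)\neq\emptyset$: let $\mathcal{G}':=\mathcal{G}\setminus\mathrm{dom}(r)$ with vertex set $V'$, $T':=T\cap\mathcal{G}'$, $p:=\mathrm{pr}(\mathcal{G}')$, $\alpha:=p\bmod 2$; compute $(Z,\sigma):=\mathit{TAttr}^{\mathcal{G}',T'}_\alpha(\mathrm{pr}^{-1}(p)\cap V')$ (the region of priority $p$); let $A:=$ extract-tangles$(Z,\sigma)$; if some $t\in A$ has $E_T(t)=\emptyset$ with $E_T$ computed in the full game $\mathcal{G}$, return $(T\cup Y,t)$; otherwise set $r(v):=p$ for all $v\in Z$ and $Y:=Y\cup A$. After the while-loop, set $T:=T\cup Y$. *)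

theory Defs
  imports Main
begin

record 'v pgame =
  V0 :: "'v set"
  V1 :: "'v set"
  E  :: "('v \<times> 'v) set"
  pr :: "'v \<Rightarrow> nat"

definition verts :: "('v, 'b) pgame_scheme \<Rightarrow> 'v set" where
  "verts G = V0 G \<union> V1 G"

text \<open>Vertices owned by player a (0 = Even, 1 = Odd).\<close>
definition owned :: "('v, 'b) pgame_scheme \<Rightarrow> nat \<Rightarrow> 'v set" where
  "owned G a = (if a = 0 then V0 G else V1 G)"

definition succs :: "('v, 'b) pgame_scheme \<Rightarrow> 'v \<Rightarrow> 'v set" where
  "succs G u = {v. (u, v) \<in> E G}"

definition valid_game :: "('v, 'b) pgame_scheme \<Rightarrow> bool" where
  "valid_game G \<longleftrightarrow> finite (verts G) \<and> V0 G \<inter> V1 G = {}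
     \<and> E G \<subseteq> verts G \<times> verts G \<and> (\<forall>v \<in> verts G. succs G v \<noteq> {})"

definition prs :: "('v, 'b) pgame_scheme \<Rightarrow> 'v set \<Rightarrow> nat" where
  "prs G U = Max (pr G ` U)"

definition subgame :: "'v pgame \<Rightarrow> 'v set \<Rightarrow> 'v pgame" where
  "subgame G U = G\<lparr>V0 := V0 G \<inter> U, V1 := V1 G \<inter> U, E := E G \<inter> (U \<times> U)\<rparr>"

definition minus_game :: "'v pgame \<Rightarrow> 'v set \<Rightarrow> 'v pgame" where
  "minus_game G U = subgame G (verts G - U)"

text \<open>Strategies are partial functions; a tangle is a vertex set with its witness strategy.\<close>
type_synonym 'v strat = "'v \<Rightarrow> 'v option"
type_synonym 'v tangle = "'v set \<times> 'v strat"

definition is_cycle :: "('v \<times> 'v) set \<Rightarrow> 'v list \<Rightarrow> bool" where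
  "is_cycle R xs \<longleftrightarrow> xs \<noteq> [] \<and> (\<forall>i < length xs. (xs ! i, xs ! (Suc i mod length xs)) \<in> R)"

definition tangle_graph :: "'v pgame \<Rightarrow> nat \<Rightarrow> 'v set \<Rightarrow> 'v strat \<Rightarrow> ('v \<times> 'v) set" where
  "tangle_graph G a U \<tau> =
     {(v, w). v \<in> U \<inter> owned G a \<and> \<tau> v = Some w \<and> (v, w) \<in> E G}
     \<union> (E G \<inter> ((U \<inter> owned G (1 - a)) \<times> U))"

definition is_tangle :: "'v pgame \<Rightarrow> 'v tangle \<Rightarrow> bool" where
  "is_tangle G t \<longleftrightarrow> (let U = fst t; \<tau> = snd t; a = prs G U mod 2;
                          H = tangle_graph G a U \<tau> in
     U \<noteq> {} \<and> U \<subseteq> verts G \<and> dom \<tau> = U \<inter> owned G a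
     \<and> (\<forall>v \<in> U \<inter> owned G a. \<exists>w. \<tau> v = Some w \<and> w \<in> U \<and> (v, w) \<in> E G)
     \<and> (\<forall>u \<in> U. \<forall>w \<in> U. (u, w) \<in> H\<^sup>*)
     \<and> (\<forall>xs. is_cycle H xs \<longrightarrow> prs G (set xs) mod 2 = a))"

definition ET :: "'v pgame \<Rightarrow> 'v set \<Rightarrow> 'v set" where
  "ET G U = {v. v \<notin> U \<and> (\<exists>u \<in> U \<inter> owned G (1 - prs G U mod 2). (u, v) \<in> E G)}"

inductive tattr_step :: "'v pgame \<Rightarrow> 'v tangle set \<Rightarrow> nat \<Rightarrow> 'v set
    \<Rightarrow> 'v set \<times> 'v strat \<Rightarrow> 'v set \<times> 'v strat \<Rightarrow> bool"
  for G T a A where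
  attr_own: "v \<in> owned G a \<Longrightarrow> v \<notin> Z \<Longrightarrow> (v, w) \<in> E G \<Longrightarrow> w \<in> Z \<Longrightarrow>
     tattr_step G T a A (Z, \<sigma>) (insert v Z, \<sigma>(v \<mapsto> w))"
| attr_opp: "v \<in> owned G (1 - a) \<Longrightarrow> v \<notin> Z \<Longrightarrow> succs G v \<subseteq> Z \<Longrightarrow>
     tattr_step G T a A (Z, \<sigma>) (insert v Z, \<sigma>)"
| attr_init: "v \<in> A \<inter> owned G a \<Longrightarrow> v \<notin> dom \<sigma> \<Longrightarrow> (v, w) \<in> E G \<Longrightarrow> w \<in> Z \<Longrightarrow>
     tattr_step G T a A (Z, \<sigma>) (Z, \<sigma>(v \<mapsto> w))"
| attr_tangle: "(U, \<tau>) \<in> T \<Longrightarrow> prs G U mod 2 = a \<Longrightarrow> ET G U \<noteq> {} \<Longrightarrow> ET G U \<subseteq> Z \<Longrightarrow>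
     \<not> U \<subseteq> Z \<Longrightarrow>
     tattr_step G T a A (Z, \<sigma>)
       (Z \<union> U, \<lambda>u. if u \<in> U \<inter> owned G a \<and> u \<notin> dom \<sigma> then \<tau> u else \<sigma> u)"

definition tattr_result :: "'v pgame \<Rightarrow> 'v tangle set \<Rightarrow> nat \<Rightarrow> 'v set \<Rightarrow> 'v set \<Rightarrow> 'v strat \<Rightarrow> bool" where
  "tattr_result G T a A Z \<sigma> \<longleftrightarrow>
     (tattr_step G T a A)\<^sup>*\<^sup>* (A, Map.empty) (Z, \<sigma>) \<and> (\<forall>s. \<not> tattr_step G T a A (Z, \<sigma>) s)"

definition closed_region :: "'v pgame \<Rightarrow> nat \<Rightarrow> 'v set \<Rightarrow> 'v strat \<Rightarrow> 'v set \<Rightarrow> bool" where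
  "closed_region G a Z \<sigma> X \<longleftrightarrow> X \<subseteq> Z
     \<and> (\<forall>v \<in> X \<inter> owned G (1 - a). succs G v \<subseteq> X)
     \<and> (\<forall>v \<in> X \<inter> owned G a. \<exists>w. \<sigma> v = Some w \<and> w \<in> X)"

definition ext_graph :: "'v pgame \<Rightarrow> nat \<Rightarrow> 'v strat \<Rightarrow> 'v set \<Rightarrow> ('v \<times> 'v) set" where
  "ext_graph G a \<sigma> Y = {(v, w). v \<in> Y \<inter> owned G a \<and> \<sigma> v = Some w}
     \<union> {(v, w). (v, w) \<in> E G \<and> v \<in> Y \<inter> owned G (1 - a)}"

definition is_bottom_scc :: "('v \<times> 'v) set \<Rightarrow> 'v set \<Rightarrow> 'v set \<Rightarrow> bool" where
  "is_bottom_scc H Y C \<longleftrightarrow> C \<noteq> {} \<and> C \<subseteq> Y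
     \<and> (\<forall>u \<in> C. \<forall>w \<in> C. (u, w) \<in> H\<^sup>*)
     \<and> (\<forall>u \<in> C. \<forall>w. (u, w) \<in> H\<^sup>* \<and> (w, u) \<in> H\<^sup>* \<longrightarrow> w \<in> C)
     \<and> (\<forall>u \<in> C. \<forall>w. (u, w) \<in> H \<longrightarrow> w \<in> C)"

definition extract_tangles :: "'v pgame \<Rightarrow> nat \<Rightarrow> 'v set \<Rightarrow> 'v strat \<Rightarrow> 'v tangle set" where
  "extract_tangles G a Z \<sigma> =
     (let Y = (GREATEST X. closed_region G a Z \<sigma> X); H = ext_graph G a \<sigma> Y in
      {(C, \<sigma> |` C) | C. is_bottom_scc H Y C \<and> (\<exists>u \<in> C. \<exists>w \<in> C. (u, w) \<in> H)})"

text \<open>States (T, r, Y) reachable at the start of an iteration of the inner while-loop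
  (or at the end of it), in some execution of search(G, T0) that has not yet returned.\<close>
inductive search_reach :: "'v pgame \<Rightarrow> 'v tangle set
    \<Rightarrow> 'v tangle set \<times> ('v \<Rightarrow> nat option) \<times> 'v tangle set \<Rightarrow> bool"
  for G T0 where
  start: "search_reach G T0 (T0, Map.empty, {})"
| inner: "search_reach G T0 (T, r, Y) \<Longrightarrow> verts G - dom r \<noteq> {} \<Longrightarrow>
     G' = minus_game G (dom r) \<Longrightarrow> p = prs G (verts G') \<Longrightarrow> a = p mod 2 \<Longrightarrow>
     tattr_result G' {t \<in> T. fst t \<subseteq> verts G'} a {v \<in> verts G'. pr G v = p} Z \<sigma> \<Longrightarrow>
     (\<forall>t \<in> extract_tangles G' a Z \<sigma>. ET G (fst t) \<noteq> {}) \<Longrightarrow>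
     search_reach G T0 (T, r ++ (\<lambda>v. if v \<in> Z then Some p else None),
                        Y \<union> extract_tangles G' a Z \<sigma>)"
| outer: "search_reach G T0 (T, r, Y) \<Longrightarrow> verts G - dom r = {} \<Longrightarrow>
     search_reach G T0 (T \<union> Y, Map.empty, {})"

end

theory Submission
  imports Defs
begin

definition wt :: "'v pgame \<Rightarrow> 'v tangle \<Rightarrow> bool" where
  "wt G t \<longleftrightarrow> (let U = fst t; \<tau> = snd t; b = prs G U mod 2 in
     U \<noteq> {} \<and> U \<subseteq> verts G
     \<and> (\<forall>v \<in> U \<inter> owned G b. \<exists>w. \<tau> v = Some w \<and> w \<in> U \<and> (v, w) \<in> E G)
     \<and> (\<forall>u \<in> U. \<forall>w \<in> U. (u, w) \<in> (tangle_graph G b U \<tau>)\<^sup>*))"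

definition vok :: "'v pgame \<Rightarrow> 'v tangle set \<Rightarrow> nat \<Rightarrow> 'v set \<Rightarrow> 'v set \<Rightarrow> 'v strat
   \<Rightarrow> ('v \<Rightarrow> nat) \<Rightarrow> 'v \<Rightarrow> bool" where
  "vok G T a A Z \<sigma> rk v \<longleftrightarrow>
     (v \<in> owned G a \<and> (\<exists>w. \<sigma> v = Some w \<and> w \<in> Z \<and> rk w < rk v))
   \<or> (v \<in> owned G (1 - a) \<and> (\<forall>w \<in> succs G v. w \<in> Z \<and> rk w < rk v))
   \<or> (\<exists>U \<tau>. (U, \<tau>) \<in> T \<and> v \<in> U \<and> prs G U mod 2 = a \<and> U \<subseteq> Z \<and> (\<forall>u \<in> U. rk u \<le> rk v)
        \<and> ET G U \<noteq> {} \<and> (\<forall>z \<in> ET G U. z \<in> Z \<and> rk z < rk v)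
        \<and> (\<forall>u \<in> U \<inter> owned G a. rk u = rk v \<longrightarrow> u \<notin> A \<longrightarrow> (\<exists>w. \<sigma> u = Some w \<and> \<tau> u = Some w)))"

definition ainv :: "'v pgame \<Rightarrow> 'v tangle set \<Rightarrow> nat \<Rightarrow> 'v set \<Rightarrow> 'v set \<times> 'v strat \<Rightarrow> bool" where
  "ainv G T a A s \<longleftrightarrow> A \<subseteq> fst s \<and> fst s \<subseteq> verts G \<and> dom (snd s) \<subseteq> fst s
     \<and> (\<forall>v w. snd s v = Some w \<longrightarrow> (v, w) \<in> E G)
     \<and> (\<exists>rk n. (\<forall>z \<in> fst s. rk z < n) \<and> (\<forall>v \<in> fst s - A. vok G T a A (fst s) (snd s) rk v))"

lemma vok_mono:
  assumes "vok G T a A Z \<sigma> rk z" "Z \<subseteq> Z'" "\<sigma> \<subseteq>\<^sub>m \<sigma>'" "\<forall>x \<in> Z. rk' x = rk x" "z \<in> Z"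
  shows "vok G T a A Z' \<sigma>' rk' z"
proof -
  have ms: "\<sigma>' x = Some w" if "\<sigma> x = Some w" for x w
    using assms(3) that unfolding map_le_def by (metis domI)
  consider (c1) w where "z \<in> owned G a" "\<sigma> z = Some w" "w \<in> Z" "rk w < rk z"
    | (c2) "z \<in> owned G (1 - a)" "\<forall>w\<in>succs G z. w \<in> Z \<and> rk w < rk z"
    | (c3) U \<tau> where "(U, \<tau>) \<in> T" "z \<in> U" "prs G U mod 2 = a" "U \<subseteq> Z" "\<forall>u\<in>U. rk u \<le> rk z"
      "ET G U \<noteq> {}" "\<forall>x\<in>ET G U. x \<in> Z \<and> rk x < rk z"
      "\<forall>u\<in>U \<inter> owned G a. rk u = rk z \<longrightarrow> u \<notin> A \<longrightarrow> (\<exists>w. \<sigma> u = Some w \<and> \<tau> u = Some w)"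
    using assms(1) unfolding vok_def by blast
  then show ?thesis
  proof cases
    case c1
    then show ?thesis unfolding vok_def using ms assms by (metis subsetD)
  next
    case c2
    then show ?thesis unfolding vok_def using assms by auto
  next
    case (c3 U \<tau>)
    have "(U, \<tau>) \<in> T \<and> z \<in> U \<and> prs G U mod 2 = a \<and> U \<subseteq> Z' \<and> (\<forall>u \<in> U. rk' u \<le> rk' z)
        \<and> ET G U \<noteq> {} \<and> (\<forall>x \<in> ET G U. x \<in> Z' \<and> rk' x < rk' z)
        \<and> (\<forall>u \<in> U \<inter> owned G a. rk' u = rk' z \<longrightarrow> u \<notin> A \<longrightarrow> (\<exists>w. \<sigma>' u = Some w \<and> \<tau> u = Some w))"
    proof (intro conjI ballI impI)
      show "U \<subseteq> Z'" using c3(4) assms(2) by blast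
      fix u assume "u \<in> U" thus "rk' u \<le> rk' z" using c3 assms(4,5) by (metis subsetD)
    next
      fix x assume "x \<in> ET G U" thus "x \<in> Z'" "rk' x < rk' z" using c3 assms(2,4,5) by (metis subsetD)+
    next
      fix u assume u: "u \<in> U \<inter> owned G a" "rk' u = rk' z" "u \<notin> A"
      have "rk u = rk z" using u c3(4) assms(4,5) by (metis IntD1 subsetD)
      thus "\<exists>w. \<sigma>' u = Some w \<and> \<tau> u = Some w" using c3(8) u ms by blast
    qed (use c3 in auto)
    then show ?thesis unfolding vok_def by blast
  qed
qed

lemma owned_sub: "owned G b \<subseteq> verts G"
  unfolding owned_def verts_def by auto

lemma step_inv:
  assumes st: "tattr_step G T a A s s'" and inv: "ainv G T a A s"
    and TT: "\<forall>t \<in> T. wt G t \<and> fst t \<subseteq> verts G"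
  shows "ainv G T a A s'"
  using st
proof cases
  case (attr_own v Z w \<sigma>)
  from inv attr_own obtain rk n where AZ: "A \<subseteq> Z" and Zv: "Z \<subseteq> verts G" and dm: "dom \<sigma> \<subseteq> Z"
    and ed: "\<forall>v w. \<sigma> v = Some w \<longrightarrow> (v, w) \<in> E G" and rkn: "\<forall>z \<in> Z. rk z < n"
    and vk: "\<forall>x \<in> Z - A. vok G T a A Z \<sigma> rk x"
    unfolding ainv_def by auto
  define rk' where "rk' = rk(v := n)"
  have ml: "\<sigma> \<subseteq>\<^sub>m \<sigma>(v \<mapsto> w)" using dm attr_own unfolding map_le_def by auto
  have agree: "\<forall>x \<in> Z. rk' x = rk x" using attr_own unfolding rk'_def by auto
  have "\<forall>x \<in> insert v Z - A. vok G T a A (insert v Z) (\<sigma>(v \<mapsto> w)) rk' x"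
  proof
    fix x assume x: "x \<in> insert v Z - A"
    show "vok G T a A (insert v Z) (\<sigma>(v \<mapsto> w)) rk' x"
    proof (cases "x = v")
      case True
      then show ?thesis unfolding vok_def using attr_own rkn agree by (auto simp: rk'_def)
    next
      case False
      then show ?thesis using vok_mono[OF _ _ ml agree] vk x by blast
    qed
  qed
  moreover have "\<forall>z \<in> insert v Z. rk' z < Suc n" using rkn by (auto simp: rk'_def)
  moreover have "v \<in> verts G" using attr_own owned_sub[of G a] by blast
  ultimately show ?thesis using attr_own AZ Zv dm ed unfolding ainv_def by auto
next
  case (attr_opp v Z \<sigma>)
  from inv attr_opp obtain rk n where AZ: "A \<subseteq> Z" and Zv: "Z \<subseteq> verts G" and dm: "dom \<sigma> \<subseteq> Z"
    and ed: "\<forall>v w. \<sigma> v = Some w \<longrightarrow> (v, w) \<in> E G" and rkn: "\<forall>z \<in> Z. rk z < n"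
    and vk: "\<forall>x \<in> Z - A. vok G T a A Z \<sigma> rk x"
    unfolding ainv_def by auto
  define rk' where "rk' = rk(v := n)"
  have ml: "\<sigma> \<subseteq>\<^sub>m \<sigma>" by simp
  have agree: "\<forall>x \<in> Z. rk' x = rk x" using attr_opp unfolding rk'_def by auto
  have "\<forall>x \<in> insert v Z - A. vok G T a A (insert v Z) \<sigma> rk' x"
  proof
    fix x assume x: "x \<in> insert v Z - A"
    show "vok G T a A (insert v Z) \<sigma> rk' x"
    proof (cases "x = v")
      case True
      have "\<forall>w\<in>succs G v. w \<in> insert v Z \<and> rk' w < rk' v"
        using attr_opp rkn agree by (auto simp: rk'_def)
      then show ?thesis unfolding vok_def using attr_opp True by blast
    next
      case False
      then show ?thesis using vok_mono[OF _ _ ml agree] vk x by blast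
    qed
  qed
  moreover have "\<forall>z \<in> insert v Z. rk' z < Suc n" using rkn by (auto simp: rk'_def)
  moreover have "v \<in> verts G" using attr_opp owned_sub[of G "1 - a"] by blast
  ultimately show ?thesis using attr_opp AZ Zv dm ed unfolding ainv_def by auto
next
  case (attr_init v \<sigma> w Z)
  from inv attr_init obtain rk n where AZ: "A \<subseteq> Z" and Zv: "Z \<subseteq> verts G" and dm: "dom \<sigma> \<subseteq> Z"
    and ed: "\<forall>v w. \<sigma> v = Some w \<longrightarrow> (v, w) \<in> E G" and rkn: "\<forall>z \<in> Z. rk z < n"
    and vk: "\<forall>x \<in> Z - A. vok G T a A Z \<sigma> rk x"
    unfolding ainv_def by auto
  have ml: "\<sigma> \<subseteq>\<^sub>m \<sigma>(v \<mapsto> w)" using attr_init unfolding map_le_def by auto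
  have "\<forall>x \<in> Z - A. vok G T a A Z (\<sigma>(v \<mapsto> w)) rk x"
    using vok_mono[OF _ _ ml, of G T a A Z rk _ Z rk] vk by blast
  hence ex: "\<exists>rk n. (\<forall>z \<in> Z. rk z < n) \<and> (\<forall>x \<in> Z - A. vok G T a A Z (\<sigma>(v \<mapsto> w)) rk x)"
    using rkn by blast
  have "v \<in> Z" using attr_init AZ by blast
  hence "dom (\<sigma>(v \<mapsto> w)) \<subseteq> Z" using dm by auto
  moreover have "\<forall>x y. (\<sigma>(v \<mapsto> w)) x = Some y \<longrightarrow> (x, y) \<in> E G" using ed attr_init by auto
  ultimately show ?thesis using attr_init AZ Zv ex unfolding ainv_def by simp
next
  case (attr_tangle U \<tau> Z \<sigma>)
  from inv attr_tangle obtain rk n where AZ: "A \<subseteq> Z" and Zv: "Z \<subseteq> verts G" and dm: "dom \<sigma> \<subseteq> Z"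
    and ed: "\<forall>v w. \<sigma> v = Some w \<longrightarrow> (v, w) \<in> E G" and rkn: "\<forall>z \<in> Z. rk z < n"
    and vk: "\<forall>x \<in> Z - A. vok G T a A Z \<sigma> rk x"
    unfolding ainv_def by auto
  define \<sigma>' where "\<sigma>' = (\<lambda>u. if u \<in> U \<inter> owned G a \<and> u \<notin> dom \<sigma> then \<tau> u else \<sigma> u)"
  define rk' where "rk' = (\<lambda>x. if x \<in> Z then rk x else n)"
  have wtU: "wt G (U, \<tau>)" using TT attr_tangle by auto
  have Uv: "U \<subseteq> verts G" using TT attr_tangle by fastforce
  have tau: "\<forall>v \<in> U \<inter> owned G a. \<exists>w. \<tau> v = Some w \<and> w \<in> U \<and> (v, w) \<in> E G"
    using wtU attr_tangle unfolding wt_def Let_def by auto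
  have ml: "\<sigma> \<subseteq>\<^sub>m \<sigma>'" unfolding map_le_def \<sigma>'_def by auto
  have agree: "\<forall>x \<in> Z. rk' x = rk x" unfolding rk'_def by auto
  have "\<forall>x \<in> Z \<union> U - A. vok G T a A (Z \<union> U) \<sigma>' rk' x"
  proof
    fix x assume x: "x \<in> Z \<union> U - A"
    show "vok G T a A (Z \<union> U) \<sigma>' rk' x"
    proof (cases "x \<in> Z")
      case False
      hence xU: "x \<in> U" and rx: "rk' x = n" using x by (auto simp: rk'_def)
      have "\<forall>u \<in> U. rk' u \<le> rk' x" using rkn rx by (auto simp: rk'_def less_imp_le)
      moreover have "\<forall>z \<in> ET G U. z \<in> Z \<union> U \<and> rk' z < rk' x" using attr_tangle rkn rx
        by (auto simp: rk'_def)
      moreover have "\<forall>u \<in> U \<inter> owned G a. rk' u = rk' x \<longrightarrow> u \<notin> A \<longrightarrow> (\<exists>w. \<sigma>' u = Some w \<and> \<tau> u = Some w)"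
      proof (intro ballI impI)
        fix u assume u: "u \<in> U \<inter> owned G a" "rk' u = rk' x"
        hence "u \<notin> Z" using rkn rx by (auto simp: rk'_def split: if_splits)
        hence "u \<notin> dom \<sigma>" using dm by blast
        thus "\<exists>w. \<sigma>' u = Some w \<and> \<tau> u = Some w" using u tau by (auto simp: \<sigma>'_def)
      qed
      ultimately show ?thesis unfolding vok_def using attr_tangle xU by blast
    next
      case True
      then show ?thesis using vok_mono[OF _ _ ml agree] vk x by blast
    qed
  qed
  moreover have "\<forall>z \<in> Z \<union> U. rk' z < Suc n" using rkn by (auto simp: rk'_def)
  moreover have "dom \<sigma>' \<subseteq> Z \<union> U" using dm unfolding \<sigma>'_def by (auto split: if_splits)
  moreover have "\<forall>v w. \<sigma>' v = Some w \<longrightarrow> (v, w) \<in> E G"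
  proof (intro allI impI)
    fix v w assume h: "\<sigma>' v = Some w"
    show "(v, w) \<in> E G"
    proof (cases "v \<in> U \<inter> owned G a \<and> v \<notin> dom \<sigma>")
      case True
      then obtain w' where "\<tau> v = Some w'" "(v, w') \<in> E G" using tau by blast
      then show ?thesis using h True unfolding \<sigma>'_def by simp
    next
      case False
      then have "\<sigma> v = Some w" using h unfolding \<sigma>'_def by (simp only: if_False)
      then show ?thesis using ed by blast
    qed
  qed
  ultimately show ?thesis using attr_tangle AZ Zv Uv unfolding ainv_def \<sigma>'_def by auto
qed

lemma reach_inv:
  assumes "(tattr_step G T a A)\<^sup>*\<^sup>* (A, Map.empty) s" "A \<subseteq> verts G"
    "\<forall>t \<in> T. wt G t \<and> fst t \<subseteq> verts G"
  shows "ainv G T a A s"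
  using assms(1)
proof (induction rule: rtranclp_induct)
  case base
  have "(\<forall>z \<in> A. (\<lambda>_. 0::nat) z < 1) \<and> (\<forall>v \<in> A - A. vok G T a A A Map.empty (\<lambda>_. 0) v)" by auto
  then show ?case using assms(2) unfolding ainv_def by fastforce
next
  case (step y z)
  then show ?case using step_inv assms(3) by blast
qed

lemma greatest_closed:
  "closed_region G a Z \<sigma> (GREATEST X. closed_region G a Z \<sigma> X)"
proof -
  define Y0 where "Y0 = \<Union>{X. closed_region G a Z \<sigma> X}"
  have c: "closed_region G a Z \<sigma> Y0"
    unfolding closed_region_def[of G a Z \<sigma> Y0]
  proof (intro conjI ballI)
    show "Y0 \<subseteq> Z" unfolding closed_region_def Y0_def by blast
  next
    fix v assume "v \<in> Y0 \<inter> owned G (1 - a)"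
    then obtain X where "closed_region G a Z \<sigma> X" "v \<in> X \<inter> owned G (1 - a)" unfolding Y0_def by blast
    then show "succs G v \<subseteq> Y0" unfolding closed_region_def Y0_def by blast
  next
    fix v assume "v \<in> Y0 \<inter> owned G a"
    then obtain X where "closed_region G a Z \<sigma> X" "v \<in> X \<inter> owned G a" unfolding Y0_def by blast
    then show "\<exists>w. \<sigma> v = Some w \<and> w \<in> Y0" unfolding closed_region_def Y0_def by blast
  qed
  have "(GREATEST X. closed_region G a Z \<sigma> X) = Y0"
    using c unfolding Y0_def by (intro Greatest_equality) auto
  then show ?thesis using c by simp
qed

lemma own_disj:
  assumes "V0 G \<inter> V1 G = {}" "a < 2" "v \<in> owned G a" "v \<in> owned G (1 - a)"
  shows False
  using assms unfolding owned_def by (cases "a = 0") auto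

lemma extract_props:
  fixes G :: "'v pgame"
  assumes fin: "finite (verts G)" and disj: "V0 G \<inter> V1 G = {}"
    and inv: "ainv G T a A (Z, \<sigma>)"
    and TT: "\<forall>t \<in> T. wt G t \<and> fst t \<subseteq> verts G"
    and Adef: "A = {v \<in> verts G. pr G v = p}" and pdef: "p = prs G (verts G)" and adef: "a = p mod 2"
    and ct: "(C, \<tau>C) \<in> extract_tangles G a Z \<sigma>"
  shows "C \<subseteq> verts G \<and> prs G C = p \<and> wt G (C, \<tau>C) \<and> (\<forall>u \<in> C \<inter> owned G (1 - a). succs G u \<subseteq> C)"
proof -
  define Y where "Y = (GREATEST X. closed_region G a Z \<sigma> X)"
  define H where "H = ext_graph G a \<sigma> Y"
  have a2: "a < 2" using adef by simp
  have Ycl: "closed_region G a Z \<sigma> Y" unfolding Y_def by (rule greatest_closed)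
  have bs: "is_bottom_scc H Y C" and edge: "\<exists>u \<in> C. \<exists>w \<in> C. (u, w) \<in> H" and tC: "\<tau>C = \<sigma> |` C"
    using ct unfolding extract_tangles_def Let_def Y_def[symmetric] H_def[symmetric] by auto
  from inv obtain rk n where AZ: "A \<subseteq> Z" and Zv: "Z \<subseteq> verts G" and dm: "dom \<sigma> \<subseteq> Z"
    and ed: "\<forall>v w. \<sigma> v = Some w \<longrightarrow> (v, w) \<in> E G"
    and vk: "\<forall>x \<in> Z - A. vok G T a A Z \<sigma> rk x"
    unfolding ainv_def by auto
  have CY: "C \<subseteq> Y" and Cne: "C \<noteq> {}" using bs unfolding is_bottom_scc_def by auto
  have YZ: "Y \<subseteq> Z" using Ycl unfolding closed_region_def by auto
  have CV: "C \<subseteq> verts G" using CY YZ Zv by blast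
  have finC: "finite C" using CV fin finite_subset by blast
  have clos: "\<And>u w. u \<in> C \<Longrightarrow> (u, w) \<in> H \<Longrightarrow> w \<in> C" using bs unfolding is_bottom_scc_def by blast
  have sc: "\<And>u w. u \<in> C \<Longrightarrow> w \<in> C \<Longrightarrow> (u, w) \<in> H\<^sup>*" using bs unfolding is_bottom_scc_def by blast
  have Hown: "(x, y) \<in> H" if "x \<in> Y" "x \<in> owned G a" "\<sigma> x = Some y" for x y
    using that unfolding H_def ext_graph_def by auto
  have Hopp: "(x, y) \<in> H" if "x \<in> Y" "x \<in> owned G (1 - a)" "(x, y) \<in> E G" for x y
    using that unfolding H_def ext_graph_def by auto
  have succ: "\<exists>w \<in> C. (v, w) \<in> H" if v: "v \<in> C" for v
  proof -
    obtain x y where xy: "x \<in> C" "y \<in> C" "(x, y) \<in> H" using edge by blast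
    have "(v, x) \<in> H\<^sup>*" using sc v xy by blast
    then show ?thesis
    proof (cases rule: converse_rtranclE)
      case base then show ?thesis using xy by blast
    next
      case (step v') then show ?thesis using clos v by blast
    qed
  qed
  have CA: "C \<inter> A \<noteq> {}"
  proof
    assume CA0: "C \<inter> A = {}"
    define k where "k = Min (rk ` C)"
    have "k \<in> rk ` C" unfolding k_def using finC Cne by (intro Min_in) auto
    then obtain v where vC: "v \<in> C" and rv: "rk v = k" by force
    have mn: "\<And>x. x \<in> C \<Longrightarrow> k \<le> rk x" unfolding k_def using finC by simp
    have vZA: "v \<in> Z - A" using vC CA0 CY YZ by blast
    then have "vok G T a A Z \<sigma> rk v" using vk by blast
    then consider (c1) w where "v \<in> owned G a" "\<sigma> v = Some w" "w \<in> Z" "rk w < rk v"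
      | (c2) "v \<in> owned G (1 - a)" "\<forall>w\<in>succs G v. w \<in> Z \<and> rk w < rk v"
      | (c3) U \<tau> where "(U, \<tau>) \<in> T" "v \<in> U" "prs G U mod 2 = a" "U \<subseteq> Z" "\<forall>u\<in>U. rk u \<le> rk v"
        "ET G U \<noteq> {}" "\<forall>x\<in>ET G U. x \<in> Z \<and> rk x < rk v"
        "\<forall>u\<in>U \<inter> owned G a. rk u = rk v \<longrightarrow> u \<notin> A \<longrightarrow> (\<exists>w. \<sigma> u = Some w \<and> \<tau> u = Some w)"
      unfolding vok_def by blast
    then show False
    proof cases
      case (c1 w)
      then have "(v, w) \<in> H" using Hown vC CY by blast
      then have "w \<in> C" using clos vC by blast
      then show False using mn c1 rv by force
    next
      case c2
      obtain w where w: "w \<in> C" "(v, w) \<in> H" using succ vC by blast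
      have "v \<notin> owned G a" using own_disj[OF disj a2] c2 by blast
      then have "(v, w) \<in> E G" using w(2) unfolding H_def ext_graph_def by auto
      then have "rk w < rk v" using c2 unfolding succs_def by auto
      then show False using mn w rv by force
    next
      case (c3 U \<tau>)
      have wtU: "wt G (U, \<tau>)" using TT c3 by blast
      define TG where "TG = tangle_graph G a U \<tau>"
      have tau: "\<forall>x \<in> U \<inter> owned G a. \<exists>w. \<tau> x = Some w \<and> w \<in> U \<and> (x, w) \<in> E G"
        and scU: "\<forall>x \<in> U. \<forall>y \<in> U. (x, y) \<in> TG\<^sup>*"
        using wtU c3(3) unfolding wt_def Let_def TG_def by auto
      have path: "x \<in> C \<and> rk x = k" if "(v, x) \<in> TG\<^sup>*" for x
        using that
      proof (induction rule: rtrancl_induct)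
        case base then show ?case using vC rv by simp
      next
        case (step x x')
        have xZA: "x \<notin> A" "x \<in> Y" using step CA0 CY by auto
        from step(2) consider (o1) "x \<in> U" "x \<in> owned G a" "\<tau> x = Some x'" "(x, x') \<in> E G"
          | (o2) "(x, x') \<in> E G" "x \<in> U" "x \<in> owned G (1 - a)" "x' \<in> U"
          unfolding TG_def tangle_graph_def by blast
        then show ?case
        proof cases
          case o1
          obtain w0 where "\<tau> x = Some w0" "w0 \<in> U" using tau o1 by blast
          then have x'U: "x' \<in> U" using o1 by simp
          have "\<sigma> x = Some x'" using c3(8) o1 xZA step(3) rv by fastforce
          then have "x' \<in> C" using Hown xZA o1 clos step(3) by blast
          moreover have "rk x' \<le> k" using c3(5) x'U rv by auto
          ultimately show ?thesis using mn by force
        next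
          case o2
          have "x' \<in> C" using Hopp xZA o2 clos step(3) by blast
          moreover have "rk x' \<le> k" using c3(5) o2 rv by auto
          ultimately show ?thesis using mn by force
        qed
      qed
      obtain z y where zy: "z \<notin> U" "y \<in> U" "y \<in> owned G (1 - a)" "(y, z) \<in> E G"
        using c3(6,3) unfolding ET_def by auto
      have "(v, y) \<in> TG\<^sup>*" using scU c3(2) zy by blast
      then have yC: "y \<in> C" using path by blast
      then have "(y, z) \<in> H" using Hopp CY zy by blast
      then have "z \<in> C" using clos yC by blast
      moreover have "z \<in> ET G U" using zy c3(3) unfolding ET_def by auto
      then have "rk z < k" using c3(7) rv by auto
      ultimately show False using mn by force
    qed
  qed
  have prsC: "prs G C = p"
  proof -
    obtain x where x: "x \<in> C" "x \<in> A" using CA by blast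
    have "\<forall>y \<in> C. pr G y \<le> p" using CV fin unfolding pdef prs_def by auto
    then show ?thesis unfolding prs_def using x Adef finC
      by (intro Max_eqI) auto
  qed
  have ba: "prs G C mod 2 = a" using prsC adef by simp
  have wtC: "wt G (C, \<tau>C)"
    unfolding wt_def Let_def fst_conv snd_conv ba
  proof (intro conjI ballI)
    show "C \<noteq> {}" by (rule Cne)
    show "C \<subseteq> verts G" by (rule CV)
  next
    fix v assume v: "v \<in> C \<inter> owned G a"
    then obtain w where w: "\<sigma> v = Some w" using Ycl CY unfolding closed_region_def by blast
    then have "(v, w) \<in> H" using Hown v CY by blast
    then have "w \<in> C" using clos v by blast
    then show "\<exists>w. \<tau>C v = Some w \<and> w \<in> C \<and> (v, w) \<in> E G" using w ed v tC by auto
  next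
    fix u w assume u: "u \<in> C" and w: "w \<in> C"
    have "(u, w) \<in> H\<^sup>*" using sc u w by blast
    then have "w \<in> C \<and> (u, w) \<in> (tangle_graph G a C \<tau>C)\<^sup>*"
    proof (induction rule: rtrancl_induct)
      case base then show ?case using u by simp
    next
      case (step x y)
      have yC: "y \<in> C" using clos step by blast
      have "(x, y) \<in> tangle_graph G a C \<tau>C"
      proof (cases "x \<in> owned G a")
        case True
        then have "\<sigma> x = Some y" using step(2) own_disj[OF disj a2] unfolding H_def ext_graph_def by auto
        then show ?thesis using True step yC ed tC unfolding tangle_graph_def by auto
      next
        case False
        then have "(x, y) \<in> E G" "x \<in> owned G (1 - a)" using step(2) unfolding H_def ext_graph_def by auto
        then show ?thesis using step yC unfolding tangle_graph_def by auto
      qed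
      then show ?case using step yC by (meson rtrancl.rtrancl_into_rtrancl)
    qed
    then show "(u, w) \<in> (tangle_graph G a C \<tau>C)\<^sup>*" by blast
  qed
  have "\<forall>u \<in> C \<inter> owned G (1 - a). succs G u \<subseteq> C"
    using Hopp clos CY unfolding succs_def by blast
  then show ?thesis using CV prsC wtC by blast
qed

lemma verts_minus[simp]: "verts (minus_game G D) = verts G - D"
  unfolding minus_game_def subgame_def verts_def by auto

lemma E_minus[simp]: "E (minus_game G D) = E G \<inter> ((verts G - D) \<times> (verts G - D))"
  unfolding minus_game_def subgame_def by simp

lemma owned_minus[simp]: "owned (minus_game G D) b = owned G b \<inter> (verts G - D)"
  unfolding minus_game_def subgame_def owned_def verts_def by auto

lemma pr_minus[simp]: "pr (minus_game G D) = pr G"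
  unfolding minus_game_def subgame_def by simp

lemma prs_minus[simp]: "prs (minus_game G D) = prs G"
  unfolding prs_def[abs_def] by simp

lemma disj_minus: "V0 G \<inter> V1 G = {} \<Longrightarrow> V0 (minus_game G D) \<inter> V1 (minus_game G D) = {}"
  unfolding minus_game_def subgame_def by auto

lemma wt_to_sub:
  assumes "wt G (U, \<tau>)" "U \<subseteq> verts G - D"
  shows "wt (minus_game G D) (U, \<tau>)"
proof -
  let ?b = "prs G U mod 2"
  have ne: "U \<noteq> {}" and tau: "\<forall>v \<in> U \<inter> owned G ?b. \<exists>w. \<tau> v = Some w \<and> w \<in> U \<and> (v, w) \<in> E G"
    and sc: "\<forall>u \<in> U. \<forall>w \<in> U. (u, w) \<in> (tangle_graph G ?b U \<tau>)\<^sup>*"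
    using assms(1) unfolding wt_def Let_def by auto
  have sub: "tangle_graph G ?b U \<tau> \<subseteq> tangle_graph (minus_game G D) ?b U \<tau>"
  proof
    fix x assume "x \<in> tangle_graph G ?b U \<tau>"
    then obtain v w where x: "x = (v, w)" and h: "(v \<in> U \<inter> owned G ?b \<and> \<tau> v = Some w \<and> (v, w) \<in> E G)
       \<or> ((v, w) \<in> E G \<and> v \<in> U \<inter> owned G (1 - ?b) \<and> w \<in> U)"
      unfolding tangle_graph_def by auto
    show "x \<in> tangle_graph (minus_game G D) ?b U \<tau>"
    proof (cases "v \<in> U \<inter> owned G ?b \<and> \<tau> v = Some w \<and> (v, w) \<in> E G")
      case True
      then obtain w0 where "\<tau> v = Some w0" "w0 \<in> U" using tau by blast
      then have "w \<in> U" using True by simp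
      then show ?thesis using True x assms(2) unfolding tangle_graph_def by auto
    next
      case False
      then show ?thesis using h x assms(2) unfolding tangle_graph_def by auto
    qed
  qed
  show ?thesis unfolding wt_def Let_def fst_conv snd_conv prs_minus
  proof (intro conjI ballI)
    show "U \<noteq> {}" by (rule ne)
    show "U \<subseteq> verts (minus_game G D)" using assms(2) by simp
  next
    fix v assume "v \<in> U \<inter> owned (minus_game G D) ?b"
    then show "\<exists>w. \<tau> v = Some w \<and> w \<in> U \<and> (v, w) \<in> E (minus_game G D)"
      using tau assms(2) by auto
  next
    fix u w assume "u \<in> U" "w \<in> U"
    then show "(u, w) \<in> (tangle_graph (minus_game G D) ?b U \<tau>)\<^sup>*"
      using sc rtrancl_mono[OF sub] by blast
  qed
qed

lemma wt_from_sub: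
  assumes "wt (minus_game G D) (U, \<tau>)"
  shows "wt G (U, \<tau>)"
proof -
  let ?b = "prs G U mod 2"
  have sub: "tangle_graph (minus_game G D) ?b U \<tau> \<subseteq> tangle_graph G ?b U \<tau>"
    unfolding tangle_graph_def by auto
  show ?thesis using assms rtrancl_mono[OF sub] unfolding wt_def Let_def by auto
qed

definition sinv :: "'v pgame \<Rightarrow> 'v tangle set \<times> ('v \<Rightarrow> nat option) \<times> 'v tangle set \<Rightarrow> bool" where
  "sinv G s \<longleftrightarrow> (\<forall>t \<in> fst s \<union> snd (snd s). wt G t) \<and> dom (fst (snd s)) \<subseteq> verts G
     \<and> (\<forall>u \<in> verts G - dom (fst (snd s)). \<forall>v \<in> dom (fst (snd s)).
          (u, v) \<in> E G \<longrightarrow> u \<notin> owned G (the (fst (snd s) v) mod 2))"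

lemma wt_sub_verts: "wt G t \<Longrightarrow> fst t \<subseteq> verts G"
  unfolding wt_def Let_def by auto

lemma attr_call:
  assumes vg: "valid_game G" and TT: "\<forall>t \<in> T. wt G t" and Dv: "D \<subseteq> verts G"
    and ne: "verts G - D \<noteq> {}"
    and G': "G' = minus_game G D" and pdef: "p = prs G (verts G')" and adef: "a = p mod 2"
    and tr: "tattr_result G' {t \<in> T. fst t \<subseteq> verts G'} a {v \<in> verts G'. pr G v = p} Z \<sigma>"
  shows "Z \<subseteq> verts G - D \<and> ainv G' {t \<in> T. fst t \<subseteq> verts G'} a {v \<in> verts G'. pr G v = p} (Z, \<sigma>)
    \<and> (\<forall>t \<in> extract_tangles G' a Z \<sigma>. fst t \<subseteq> verts G - D \<and> prs G (fst t) = p \<and> wt G t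
          \<and> (\<forall>u \<in> fst t \<inter> owned G' (1 - a). succs G' u \<subseteq> fst t))"
proof -
  let ?T = "{t \<in> T. fst t \<subseteq> verts G'}"
  let ?A = "{v \<in> verts G'. pr G v = p}"
  have fin: "finite (verts G')" using vg G' unfolding valid_game_def by simp
  have disj: "V0 G' \<inter> V1 G' = {}" using vg G' disj_minus unfolding valid_game_def by blast
  have TT': "\<forall>t \<in> ?T. wt G' t \<and> fst t \<subseteq> verts G'"
    using TT wt_to_sub G' by (metis (mono_tags, lifting) mem_Collect_eq prod.collapse verts_minus)
  have inv: "ainv G' ?T a ?A (Z, \<sigma>)"
    using tr reach_inv[OF _ _ TT'] unfolding tattr_result_def by blast
  have Zs: "Z \<subseteq> verts G - D" using inv G' unfolding ainv_def by simp
  have "\<forall>t \<in> extract_tangles G' a Z \<sigma>. fst t \<subseteq> verts G - D \<and> prs G (fst t) = p \<and> wt G t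
          \<and> (\<forall>u \<in> fst t \<inter> owned G' (1 - a). succs G' u \<subseteq> fst t)"
  proof
    fix t assume t: "t \<in> extract_tangles G' a Z \<sigma>"
    obtain C \<tau>C where tc: "t = (C, \<tau>C)" by (cases t)
    have pd: "p = prs G' (verts G')" using pdef G' by simp
    have pr': "?A = {v \<in> verts G'. pr G' v = p}" using G' by simp
    have "C \<subseteq> verts G' \<and> prs G' C = p \<and> wt G' (C, \<tau>C) \<and> (\<forall>u \<in> C \<inter> owned G' (1 - a). succs G' u \<subseteq> C)"
      using extract_props[OF fin disj inv TT' pr' pd adef] t tc by blast
    then show "fst t \<subseteq> verts G - D \<and> prs G (fst t) = p \<and> wt G t
          \<and> (\<forall>u \<in> fst t \<inter> owned G' (1 - a). succs G' u \<subseteq> fst t)"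
      using tc G' wt_from_sub by auto
  qed
  then show ?thesis using Zs inv by blast
qed

lemma is_tangle_wt: "is_tangle G t \<Longrightarrow> wt G t"
  unfolding is_tangle_def wt_def Let_def by auto

lemma sinv_reach:
  assumes vg: "valid_game G" and T0: "\<forall>t \<in> T0. is_tangle G t"
    and sr: "search_reach G T0 s"
  shows "sinv G s"
  using sr
proof (induction rule: search_reach.induct)
  case start
  then show ?case using T0 is_tangle_wt unfolding sinv_def by auto
next
  case (inner T r Y G' p a Z \<sigma>)
  have wT: "\<forall>t \<in> T. wt G t" and wY: "\<forall>t \<in> Y. wt G t" and Dv: "dom r \<subseteq> verts G"
    and ri: "\<forall>u \<in> verts G - dom r. \<forall>v \<in> dom r. (u, v) \<in> E G \<longrightarrow> u \<notin> owned G (the (r v) mod 2)"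
    using inner.IH unfolding sinv_def by auto
  note ac = attr_call[OF vg wT Dv inner.hyps(2,3,4,5,6)]
  have Zs: "Z \<subseteq> verts G - dom r" using ac by blast
  have wX: "\<forall>t \<in> extract_tangles G' a Z \<sigma>. wt G t" using ac by blast
  define r' where "r' = r ++ (\<lambda>v. if v \<in> Z then Some p else None)"
  have dr': "dom r' = Z \<union> dom r" unfolding r'_def by (auto simp: dom_def)
  have trm: "\<not> tattr_step G' {t \<in> T. fst t \<subseteq> verts G'} a {v \<in> verts G'. pr G v = p} (Z, \<sigma>) s'" for s'
    using inner.hyps(6) unfolding tattr_result_def by blast
  have "\<forall>u \<in> verts G - dom r'. \<forall>v \<in> dom r'. (u, v) \<in> E G \<longrightarrow> u \<notin> owned G (the (r' v) mod 2)"
  proof (intro ballI impI)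
    fix u v assume u: "u \<in> verts G - dom r'" and v: "v \<in> dom r'" and uv: "(u, v) \<in> E G"
    show "u \<notin> owned G (the (r' v) mod 2)"
    proof (cases "v \<in> Z")
      case True
      then have rv: "the (r' v) = p" unfolding r'_def by simp
      show ?thesis
      proof
        assume uo: "u \<in> owned G (the (r' v) mod 2)"
        have "u \<in> owned G' a" using uo rv inner.hyps(3,5) u dr' by auto
        moreover have "u \<notin> Z" using u dr' by auto
        moreover have "(u, v) \<in> E G'" using uv u True Zs dr' inner.hyps(3) by auto
        ultimately have "tattr_step G' {t \<in> T. fst t \<subseteq> verts G'} a {v \<in> verts G'. pr G v = p} (Z, \<sigma>) (insert u Z, \<sigma>(u \<mapsto> v))"
          using True by (intro tattr_step.attr_own)
        then show False using trm by blast
      qed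
    next
      case False
      then have "r' v = r v" unfolding r'_def by (simp add: map_add_def)
      moreover have "v \<in> dom r" using v False dr' by auto
      ultimately show ?thesis using ri u uv dr' by auto
    qed
  qed
  moreover have "dom r' \<subseteq> verts G" using dr' Zs Dv by auto
  moreover have "\<forall>t \<in> T \<union> (Y \<union> extract_tangles G' a Z \<sigma>). wt G t" using wT wY wX by blast
  ultimately show ?case unfolding sinv_def r'_def[symmetric] fst_conv snd_conv by blast
next
  case (outer T r Y)
  then show ?case unfolding sinv_def by auto
qed

theorem lemma4:
  fixes G :: "'v pgame" and T0 T Y :: "'v tangle set" and r :: "'v \<Rightarrow> nat option"
  assumes "valid_game G"
    and "\<forall>t \<in> T0. is_tangle G t"
    and "search_reach G T0 (T, r, Y)"
    and "verts G - dom r \<noteq> {}"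
    and "G' = minus_game G (dom r)"
    and "p = prs G (verts G')"
    and "a = p mod 2"
    and "tattr_result G' {t \<in> T. fst t \<subseteq> verts G'} a {v \<in> verts G'. pr G v = p} Z \<sigma>"
    and "t \<in> extract_tangles G' a Z \<sigma>"
  shows "\<forall>v \<in> ET G (fst t). v \<in> dom r \<and> the (r v) mod 2 = a"
proof
  fix v assume v: "v \<in> ET G (fst t)"
  have si: "sinv G (T, r, Y)" using sinv_reach assms(1,2,3) by blast
  have wT: "\<forall>t \<in> T. wt G t" and Dv: "dom r \<subseteq> verts G"
    and ri: "\<forall>u \<in> verts G - dom r. \<forall>v \<in> dom r. (u, v) \<in> E G \<longrightarrow> u \<notin> owned G (the (r v) mod 2)"
    using si unfolding sinv_def by auto
  note ac = attr_call[OF assms(1) wT Dv assms(4,5,6,7,8)]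
  have tp: "fst t \<subseteq> verts G - dom r" "prs G (fst t) = p"
    "\<forall>u \<in> fst t \<inter> owned G' (1 - a). succs G' u \<subseteq> fst t"
    using ac assms(9) by blast+
  obtain u where u: "u \<in> fst t" "u \<in> owned G (1 - a)" "(u, v) \<in> E G" "v \<notin> fst t"
    using v tp(2) assms(7) unfolding ET_def by auto
  have uG': "u \<in> verts G - dom r" using u tp(1) by blast
  have vV: "v \<in> verts G" using u(3) assms(1) unfolding valid_game_def by blast
  have vd: "v \<in> dom r"
  proof (rule ccontr)
    assume "v \<notin> dom r"
    then have "v \<in> succs G' u" using u uG' vV assms(5) unfolding succs_def by auto
    moreover have "u \<in> fst t \<inter> owned G' (1 - a)" using u uG' assms(5) by auto
    ultimately show False using tp(3) u(4) by blast
  qed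
  have "u \<notin> owned G (the (r v) mod 2)" using ri uG' vd u(3) by blast
  then have "the (r v) mod 2 \<noteq> 1 - a" using u(2) by metis
  then have "the (r v) mod 2 = a" using assms(7) by presburger
  then show "v \<in> dom r \<and> the (r v) mod 2 = a" using vd by blast
qed

end
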